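(* Let $N\ge 1$ be an integer and $\sigma>0$. Define $$Z_2(\sigma)=\frac{C_{N,2}(\sigma)}{(2\pi)^N N!}\int_{\mathbb{R}_+^N}\prod_{i=1}^N \exp\!\Big(-\frac{\log^2(u_i)}{2\sigma^2}\Big)\,|\Delta(u)|^{2}\prod_{i=1}^N du_i,\qquad C_{N,2}(\sigma)=\frac{\omega_2(N)(2\pi)^N}{2^{N^2}}\exp\!\Big(-N^3\frac{\sigma^2}{2}\Big).$$ Then $$Z_2(\sigma)=\frac{\omega_2(N)}{2^{N^2}}\,(2\pi\sigma^2)^{N/2}\exp\!\Big((N^3-N)\frac{\sigma^2}{6}\Big)\prod_{k=1}^{N-1}\big(1-e^{-k\sigma^2}\big)^{N-k}.$$ Equivalently, $$\int_{\mathbb{R}_+^N}\prod_{i=1}^N e^{-\log^2(u_i)/(2\sigma^2)}\,\Delta(u)^2\prod_i du_i = N!\,(2\pi\sigma^2)^{N/2}\exp\!\Big(\frac{N^3\sigma^2}{2}+\frac{(N^3-N)\sigma^2}{6}\Big)\prod_{k=1}^{N-1}(1-e^{-k\sigma^2})^{N-k}.$$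
   Context: $\Delta(u)=\prod_{i<j}(u_i-u_j)$ is the Vandermonde determinant of $u=(u_1,\dots,u_N)$, and $\mathbb{R}_+=(0,\infty)$. $\omega_2(N)>0$ is a constant depending only on $N$ (a normalization constant of the Riemannian volume), which appears as the same factor on both sides. $Z_2(\sigma)$ so defined is the partition function $\int \exp(-d(x,\bar x)^2/(2\sigma^2))\,d\mathrm{vol}(x)$ of the Riemannian Gaussian distribution on the space $\mathcal{P}_{\mathbb{C}}(N)\cong \mathrm{GL}(N,\mathbb{C})/\mathrm{U}(N)$ of Hermitian positive definite $N\times N$ matrices. *)

theory Defs
  imports "HOL-Analysis.Analysis" "HOL-Probability.Probability"
begin

definition vandermonde :: "nat \<Rightarrow> (nat \<Rightarrow> real) \<Rightarrow> real" where
  "vandermonde N u = (\<Prod>i<N. \<Prod>j\<in>{i<..<N}. (u i - u j))"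

definition pos_orthant :: "nat \<Rightarrow> (nat \<Rightarrow> real) set" where
  "pos_orthant N = {u \<in> space (PiM {..<N} (\<lambda>_. lborel)). \<forall>i<N. 0 < u i}"

definition C_N2 :: "real \<Rightarrow> nat \<Rightarrow> real \<Rightarrow> real" where
  "C_N2 \<omega> N \<sigma> = \<omega> * (2 * pi) ^ N / 2 ^ (N^2) * exp (- (real N ^ 3) * \<sigma>^2 / 2)"

text \<open>Partition function Z_2(sigma); \<omega> stands for the normalisation constant omega_2(N).\<close>
definition Z2 :: "real \<Rightarrow> nat \<Rightarrow> real \<Rightarrow> real" where
  "Z2 \<omega> N \<sigma> = C_N2 \<omega> N \<sigma> / ((2 * pi) ^ N * fact N) *
     set_lebesgue_integral (PiM {..<N} (\<lambda>_. lborel)) (pos_orthant N)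
       (\<lambda>u. (\<Prod>i<N. exp (- ((ln (u i)) ^ 2) / (2 * \<sigma> ^ 2))) * (abs (vandermonde N u)) ^ 2)"

end

theory Submission
  imports Defs "Jordan_Normal_Form.Determinant"
begin


definition vmat :: "nat \<Rightarrow> (nat \<Rightarrow> real) \<Rightarrow> real mat" where
  "vmat n x = mat n n (\<lambda>(i,j). x i ^ j)"

lemma prod_shift_pairs:
  "(\<Prod>i<Suc n. \<Prod>j\<in>{i<..<Suc n}. (x j - x i :: real)) =
   (\<Prod>i<n. (x (Suc i) - x 0)) * (\<Prod>i<n. \<Prod>j\<in>{i<..<n}. (x (Suc j) - x (Suc i)))"
proof -
  have a: "(\<Prod>j\<in>{0<..<Suc n}. (x j - x 0)) = (\<Prod>i<n. (x (Suc i) - x 0))"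
  proof -
    have e: "{0<..<Suc n} = {Suc 0..<Suc n}" by auto
    show ?thesis unfolding e prod.shift_bounds_Suc_ivl atLeast0LessThan ..
  qed
  have b: "(\<Prod>j\<in>{Suc i<..<Suc n}. (x j - x (Suc i))) = (\<Prod>j\<in>{i<..<n}. (x (Suc j) - x (Suc i)))" for i
  proof -
    have e: "{Suc i<..<Suc n} = {Suc (Suc i)..<Suc n}" "{i<..<n} = {Suc i..<n}" by auto
    show ?thesis unfolding e prod.shift_bounds_Suc_ivl ..
  qed
  show ?thesis by (simp add: prod.lessThan_Suc_shift a b del: prod.lessThan_Suc)
qed

lemma det_vmat: "Determinant.det (vmat n x) = (\<Prod>i<n. \<Prod>j\<in>{i<..<n}. (x j - x i))"
proof (induction n arbitrary: x)
  case 0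
  then show ?case by (simp add: vmat_def)
next
  case (Suc n)
  define U :: "real mat" where "U = mat (Suc n) (Suc n) (\<lambda>(i,j). (if i = j then 1 else 0) + (if Suc i = j then - x 0 else 0))"
  have Uc: "U \<in> carrier_mat (Suc n) (Suc n)" by (simp add: U_def)
  have Vc: "vmat (Suc n) x \<in> carrier_mat (Suc n) (Suc n)" by (simp add: vmat_def)
  have "upper_triangular U" by (auto simp: U_def upper_triangular_def)
  then have dU: "Determinant.det U = 1"
    using det_upper_triangular[OF _ Uc] by (simp add: prod_list_diag_prod U_def)
  define B where "B = vmat (Suc n) x * U"
  have Bc: "B \<in> carrier_mat (Suc n) (Suc n)" using Uc Vc by (simp add: B_def)
  have dB: "Determinant.det B = Determinant.det (vmat (Suc n) x)"
    using det_mult[OF Vc Uc] dU by (simp add: B_def)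
  have Bij: "B $$ (i,j) = (if j = 0 then 1 else x i ^ j - x 0 * x i ^ (j - 1))" if "i < Suc n" "j < Suc n" for i j
  proof -
    have "B $$ (i,j) = (\<Sum>k\<in>{0..<Suc n}. x i ^ k * ((if k = j then 1 else 0) + (if Suc k = j then - x 0 else 0)))"
      using that by (simp add: B_def vmat_def U_def scalar_prod_def)
    also have "\<dots> = (\<Sum>k\<in>{0..<Suc n}. (if k = j then x i ^ k else 0)) + (\<Sum>k\<in>{0..<Suc n}. (if Suc k = j then - x 0 * x i ^ k else 0))"
      by (subst sum.distrib[symmetric], intro sum.cong) auto
    also have "\<dots> = (if j = 0 then 1 else x i ^ j - x 0 * x i ^ (j - 1))"
    proof (cases j)
      case 0 then show ?thesis using that by simp
    next
      case (Suc j')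
      have "(\<Sum>k\<in>{0..<Suc n}. (if Suc k = j then - x 0 * x i ^ k else 0)) = (\<Sum>k\<in>{0..<Suc n}. (if k = j' then - x 0 * x i ^ k else 0))"
        using Suc by (intro sum.cong) auto
      then show ?thesis using that Suc by simp
    qed
    finally show ?thesis .
  qed
  define D :: "real mat" where "D = mat n n (\<lambda>(i,j). if i = j then x (Suc i) - x 0 else 0)"
  define W where "W = vmat n (\<lambda>i. x (Suc i))"
  have L1: "Determinant.det B = (\<Sum>j<Suc n. B $$ (0, j) * cofactor B 0 j)"
    using laplace_expansion_row[OF Bc, of 0] by simp
  have L2: "(\<Sum>j<Suc n. B $$ (0, j) * cofactor B 0 j) = B $$ (0,0) * cofactor B 0 0 + (\<Sum>j<n. B $$ (0, Suc j) * cofactor B 0 (Suc j))"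
    by (rule sum.lessThan_Suc_shift)
  have L3: "(\<Sum>j<n. B $$ (0, Suc j) * cofactor B 0 (Suc j)) = 0"
    by (intro sum.neutral ballI) (simp add: Bij)
  have L4: "B $$ (0,0) = 1" by (simp add: Bij)
  have L5: "cofactor B 0 0 = Determinant.det (mat_delete B 0 0)" by (simp add: cofactor_def)
  have L6: "mat_delete B 0 0 = D * W"
  proof (rule eq_matI)
    fix i j assume ij: "i < dim_row (D * W)" "j < dim_col (D * W)"
    then have ij': "i < n" "j < n" by (auto simp: W_def D_def vmat_def)
    have "(D * W) $$ (i,j) = (\<Sum>k\<in>{0..<n}. (if i = k then x (Suc i) - x 0 else 0) * x (Suc k) ^ j)"
      using ij' by (simp add: D_def W_def vmat_def scalar_prod_def)
    also have "\<dots> = (\<Sum>k\<in>{0..<n}. if k = i then (x (Suc i) - x 0) * x (Suc i) ^ j else 0)"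
      by (intro sum.cong) auto
    also have "\<dots> = (x (Suc i) - x 0) * x (Suc i) ^ j"
      using ij' by simp
    finally have e: "(D * W) $$ (i,j) = (x (Suc i) - x 0) * x (Suc i) ^ j" .
    have "mat_delete B 0 0 $$ (i, j) = B $$ (Suc i, Suc j)"
      using ij' Bc by (simp add: mat_delete_def)
    also have "\<dots> = (x (Suc i) - x 0) * x (Suc i) ^ j"
      using ij' by (simp add: Bij algebra_simps)
    finally show "mat_delete B 0 0 $$ (i, j) = (D * W) $$ (i, j)" using e by simp
  qed (use Bc in \<open>auto simp: mat_delete_def W_def D_def vmat_def\<close>)
  have L7: "Determinant.det (D * W) = Determinant.det D * Determinant.det W"
    by (rule det_mult) (auto simp: D_def W_def vmat_def)
  have "upper_triangular D" by (auto simp: D_def upper_triangular_def)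
  then have L8: "Determinant.det D = (\<Prod>i<n. (x (Suc i) - x 0))"
    using det_upper_triangular[of D n] by (auto simp: D_def prod_list_diag_prod atLeast0LessThan)
  have L9: "Determinant.det W = (\<Prod>i<n. \<Prod>j\<in>{i<..<n}. (x (Suc j) - x (Suc i)))"
    unfolding W_def by (rule Suc.IH)
  have "Determinant.det (vmat (Suc n) x) = (\<Prod>i<n. (x (Suc i) - x 0)) * (\<Prod>i<n. \<Prod>j\<in>{i<..<n}. (x (Suc j) - x (Suc i)))"
    by (simp only: dB[symmetric] L1 L2 L3 L4 L5 L6 L7 L8 L9 mult_1_left add_0_right)
  then show ?case by (simp only: prod_shift_pairs)
qed

lemma vandermonde_sum:
  "(\<Sum>p | p permutes {0..<n}. of_int (sign p) * (\<Prod>i = 0..<n. x i ^ p i)) = (\<Prod>i<n. \<Prod>j\<in>{i<..<n}. (x j - x i :: real))"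
proof -
  have "Determinant.det (vmat n x) = (\<Sum>p | p permutes {0..<n}. of_int (sign p) * (\<Prod>i = 0..<n. vmat n x $$ (i, p i)))"
    by (rule det_def') (simp add: vmat_def)
  also have "\<dots> = (\<Sum>p | p permutes {0..<n}. of_int (sign p) * (\<Prod>i = 0..<n. x i ^ p i))"
    by (intro sum.cong refl arg_cong2[where f="(*)"] prod.cong) (auto simp: vmat_def permutes_in_image)
  finally show ?thesis using det_vmat by simp
qed



lemma gauss_exp:
  fixes \<sigma> a :: real assumes "\<sigma> > 0"
  shows "has_bochner_integral lborel (\<lambda>t. exp (- (t^2) / (2*\<sigma>^2)) * exp (a * t))
           (sqrt (2*pi*\<sigma>^2) * exp (a^2 * \<sigma>^2 / 2))"
proof -
  have eq: "exp (- (t^2) / (2*\<sigma>^2)) * exp (a * t) =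
      (sqrt (2*pi*\<sigma>^2) * exp (a^2 * \<sigma>^2 / 2)) * normal_density (a*\<sigma>^2) \<sigma> t" for t
  proof -
    have "- (t^2) / (2*\<sigma>^2) + a * t = a^2 * \<sigma>^2 / 2 + (- ((t - a*\<sigma>^2)^2) / (2*\<sigma>^2))"
      using assms by (simp add: field_simps power2_eq_square)
    then have "exp (- (t^2) / (2*\<sigma>^2)) * exp (a * t) = exp (a^2 * \<sigma>^2 / 2) * exp (- ((t - a*\<sigma>^2)^2) / (2*\<sigma>^2))"
      by (simp add: exp_add[symmetric])
    moreover have "sqrt (2*pi*\<sigma>^2) > 0" using assms by simp
    ultimately show ?thesis using assms by (simp add: normal_density_def)
  qed
  have "has_bochner_integral lborel (\<lambda>t. (sqrt (2*pi*\<sigma>^2) * exp (a^2 * \<sigma>^2 / 2)) * normal_density (a*\<sigma>^2) \<sigma> t)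
          ((sqrt (2*pi*\<sigma>^2) * exp (a^2 * \<sigma>^2 / 2)) * 1)"
    apply (rule has_bochner_integral_mult_right)
    using integral_normal_density[of \<sigma> "a*\<sigma>^2"] integrable_normal_density[of \<sigma> "a*\<sigma>^2"] assms
    by (metis has_bochner_integral_integrable)
  then show ?thesis by (simp only: eq mult_1_right)
qed

lemma moment:
  fixes \<sigma> :: real and k :: nat assumes "\<sigma> > 0"
  shows "has_bochner_integral lborel (\<lambda>t. indicator {0<..} t * (exp (- ((ln t)^2) / (2*\<sigma>^2)) * t ^ k))
           (sqrt (2*pi*\<sigma>^2) * exp ((real k + 1)^2 * \<sigma>^2 / 2))"
proof -
  define V where "V = sqrt (2*pi*\<sigma>^2) * exp ((real k + 1)^2 * \<sigma>^2 / 2)"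
  define f where "f = (\<lambda>u::real. exp (- ((ln u)^2) / (2*\<sigma>^2)) * u ^ k)"
  have G: "has_bochner_integral lborel (\<lambda>t. exp (- (t^2) / (2*\<sigma>^2)) * exp ((real k + 1) * t)) V"
    using gauss_exp[OF assms, of "real k + 1"] by (simp add: V_def)
  have eqg: "\<bar>exp t\<bar> * f (exp t) = exp (- (t^2) / (2*\<sigma>^2)) * exp ((real k + 1) * t)" for t
    by (simp add: f_def exp_of_nat_mult[symmetric] exp_add[symmetric] algebra_simps)
  have hi: "((\<lambda>t. \<bar>exp t\<bar> * f (exp t)) has_integral V) UNIV"
    using has_integral_integral_lborel[OF integrable.intros[OF G]] has_bochner_integral_integral_eq[OF G]
    by (simp only: eqg)
  have ai: "(\<lambda>t. \<bar>exp t\<bar> * f (exp t)) absolutely_integrable_on UNIV"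
    using hi by (subst absolutely_integrable_on_iff_nonneg) (auto simp: f_def)
  have "f absolutely_integrable_on (exp ` UNIV) \<and> integral (exp ` UNIV) f = V"
    using has_absolute_integral_change_of_variables_1'[of UNIV exp exp f V] ai hi
    by (auto intro: DERIV_exp simp: inj_on_def)
  moreover have "exp ` UNIV = {0::real<..}"
    by (auto simp: image_iff) (metis exp_ln)
  ultimately have fi: "(f has_integral V) {0<..}"
    by (metis absolutely_integrable_on_def has_integral_integral set_lebesgue_integral_eq_integral(1))
  have nn: "integral\<^sup>N lborel (\<lambda>x. indicator {0<..} x * f x) = V"
    by (rule nn_integral_has_integral_lebesgue[OF _ fi]) (simp add: f_def)
  have "has_bochner_integral lborel (\<lambda>x. indicator {0<..} x * f x) V"
  proof (rule has_bochner_integral_nn_integral)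
    show "(\<lambda>x. indicator {0<..} x * f x) \<in> borel_measurable lborel"
      unfolding f_def by measurable
    show "AE x in lborel. 0 \<le> indicator {0<..} x * f x" by (auto simp: f_def indicator_def)
    show "0 \<le> V" by (simp add: V_def)
    show "(\<integral>\<^sup>+ x. ennreal (indicator {0<..} x * f x) \<partial>lborel) = ennreal V" using nn by simp
  qed
  then show ?thesis by (simp add: f_def V_def)
qed



lemma sign_sq: "real_of_int (sign p) * real_of_int (sign p) = 1"
  by (auto simp: sign_def)

lemma double_perm_sum:
  fixes M :: "nat \<Rightarrow> real"
  shows "(\<Sum>p\<in>{p. p permutes {..<N}}. \<Sum>\<tau>\<in>{p. p permutes {..<N}}.
            of_int (sign p) * of_int (sign \<tau>) * (\<Prod>i<N. M (p i + \<tau> i))) =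
         fact N * (\<Sum>\<rho>\<in>{p. p permutes {..<N}}. of_int (sign \<rho>) * (\<Prod>i<N. M (i + \<rho> i)))"
proof -
  define D where "D = (\<Sum>\<rho>\<in>{p. p permutes {..<N}}. of_int (sign \<rho>) * (\<Prod>i<N. M (i + \<rho> i)))"
  have inner: "(\<Sum>\<tau>\<in>{p. p permutes {..<N}}. of_int (sign p) * of_int (sign \<tau>) * (\<Prod>i<N. M (p i + \<tau> i))) = D"
    if p: "p permutes {..<N}" for p
  proof -
    have "(\<Sum>\<tau>\<in>{p. p permutes {..<N}}. of_int (sign p) * of_int (sign \<tau>) * (\<Prod>i<N. M (p i + \<tau> i)))
        = (\<Sum>\<rho>\<in>{p. p permutes {..<N}}. of_int (sign p) * of_int (sign (\<rho> \<circ> p)) * (\<Prod>i<N. M (p i + (\<rho> \<circ> p) i)))"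
      by (rule sum_permutations_compose_right[OF p])
    also have "\<dots> = D"
      unfolding D_def
    proof (rule sum.cong[OF refl])
      fix \<rho> assume "\<rho> \<in> {p. p permutes {..<N}}"
      then have r: "\<rho> permutes {..<N}" by simp
      have "permutation \<rho>" "permutation p" using r p by (auto simp: permutation_permutes)
      then have s: "sign (\<rho> \<circ> p) = sign \<rho> * sign p" by (rule sign_compose)
      have pr: "(\<Prod>i<N. M (p i + \<rho> (p i))) = (\<Prod>i<N. M (i + \<rho> i))"
        using prod.permute[OF p, of "\<lambda>i. M (i + \<rho> i)"] by (simp add: comp_def)
      show "of_int (sign p) * of_int (sign (\<rho> \<circ> p)) * (\<Prod>i<N. M (p i + (\<rho> \<circ> p) i)) =
            of_int (sign \<rho>) * (\<Prod>i<N. M (i + \<rho> i))"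
        using sign_sq[of p] by (simp add: s pr algebra_simps)
    qed
    finally show ?thesis .
  qed
  have "(\<Sum>p\<in>{p. p permutes {..<N}}. \<Sum>\<tau>\<in>{p. p permutes {..<N}}.
            of_int (sign p) * of_int (sign \<tau>) * (\<Prod>i<N. M (p i + \<tau> i))) = (\<Sum>p\<in>{p. p permutes {..<N}}. D)"
    by (intro sum.cong refl inner) simp
  also have "\<dots> = fact N * D"
    using card_permutations[of "{..<N}" N] by simp
  finally show ?thesis unfolding D_def .
qed

lemma sum_sq: "6 * (\<Sum>j<N. real j ^ 2) = real N * (real N - 1) * (2 * real N - 1)"
  by (induction N) (simp_all add: algebra_simps power2_eq_square)

lemma sum_lin: "2 * (\<Sum>j<N. real j) = real N * (real N - 1)"
  by (induction N) (simp_all add: algebra_simps)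

lemma qprod:
  fixes s :: real
  shows "(\<Prod>i<N. \<Prod>j\<in>{i<..<N}. (exp (s * real j) - exp (s * real i))) =
     exp (s * (\<Sum>j<N. real j ^ 2)) * (\<Prod>k\<in>{1..<N}. (1 - exp (- real k * s)) ^ (N - k))"
proof (induction N)
  case 0 then show ?case by simp
next
  case (Suc N)
  define a where "a = (\<lambda>k::nat. 1 - exp (- real k * s))"
  have sets: "{i<..<Suc N} = insert N {i<..<N}" if "i < N" for i using that by auto
  have "(\<Prod>i<Suc N. \<Prod>j\<in>{i<..<Suc N}. (exp (s * real j) - exp (s * real i)))
      = (\<Prod>i<N. \<Prod>j\<in>{i<..<Suc N}. (exp (s * real j) - exp (s * real i)))"
  proof -
    have e: "{N<..<Suc N} = {}" by auto
    show ?thesis by (simp add: e)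
  qed
  also have "\<dots> = (\<Prod>i<N. (exp (s * real N) - exp (s * real i)) * (\<Prod>j\<in>{i<..<N}. (exp (s * real j) - exp (s * real i))))"
    by (intro prod.cong refl) (simp add: sets)
  also have "\<dots> = (\<Prod>i<N. (exp (s * real N) - exp (s * real i))) * (\<Prod>i<N. \<Prod>j\<in>{i<..<N}. (exp (s * real j) - exp (s * real i)))"
    by (rule prod.distrib)
  also have "(\<Prod>i<N. (exp (s * real N) - exp (s * real i))) = (\<Prod>i<N. exp (s * N) * a (N - i))"
  proof (intro prod.cong refl)
    fix i assume "i \<in> {..<N}"
    then have "real (N - i) = real N - real i" by simp
    then have "exp (s * N) * exp (- real (N - i) * s) = exp (s * real i)"
      by (simp add: exp_add[symmetric] algebra_simps)
    then show "exp (s * real N) - exp (s * real i) = exp (s * N) * a (N - i)"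
      by (simp add: a_def right_diff_distrib)
  qed
  also have "\<dots> = exp (s * N) ^ N * (\<Prod>k\<in>{1..N}. a k)"
  proof -
    have "(\<Prod>i<N. a (N - i)) = (\<Prod>k\<in>{1..N}. a k)"
    proof (rule prod.reindex_bij_witness[where i="\<lambda>k. N - k" and j="\<lambda>i. N - i"]) qed auto
    then show ?thesis by (simp add: prod.distrib)
  qed
  also have "exp (s * N) ^ N = exp (s * (real N ^ 2))"
    by (simp add: exp_of_nat_mult[symmetric] power2_eq_square algebra_simps)
  finally have L: "(\<Prod>i<Suc N. \<Prod>j\<in>{i<..<Suc N}. (exp (s * real j) - exp (s * real i))) =
      exp (s * (real N ^ 2)) * (\<Prod>k\<in>{1..N}. a k) * (exp (s * (\<Sum>j<N. real j ^ 2)) * (\<Prod>k\<in>{1..<N}. a k ^ (N - k)))"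
    using Suc.IH by (simp add: a_def)
  have R: "(\<Prod>k\<in>{1..<Suc N}. a k ^ (Suc N - k)) = (\<Prod>k\<in>{1..N}. a k) * (\<Prod>k\<in>{1..<N}. a k ^ (N - k))"
  proof -
    have "(\<Prod>k\<in>{1..<Suc N}. a k ^ (Suc N - k)) = (\<Prod>k\<in>{1..N}. a k * a k ^ (N - k))"
      by (intro prod.cong) (auto simp: Suc_diff_le)
    also have "\<dots> = (\<Prod>k\<in>{1..N}. a k) * (\<Prod>k\<in>{1..N}. a k ^ (N - k))" by (rule prod.distrib)
    also have "(\<Prod>k\<in>{1..N}. a k ^ (N - k)) = (\<Prod>k\<in>{1..<N}. a k ^ (N - k))"
    proof (cases N)
      case 0 then show ?thesis by simp
    next
      case (Suc m)
      then have "{1..N} = insert N {1..<N}" by auto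
      then show ?thesis by simp
    qed
    finally show ?thesis .
  qed
  have R': "(\<Prod>k\<in>{1..<Suc N}. (1 - exp (- real k * s)) ^ (Suc N - k)) = (\<Prod>k\<in>{1..N}. a k) * (\<Prod>k\<in>{1..<N}. a k ^ (N - k))"
    using R by (simp only: a_def)
  have E: "exp (s * (\<Sum>j<Suc N. real j ^ 2)) = exp (s * (real N ^ 2)) * exp (s * (\<Sum>j<N. real j ^ 2))"
    by (simp add: exp_add[symmetric] algebra_simps)
  show ?case
    by (simp only: L R' E) (simp add: ac_simps)
qed



lemma ind_prod:
  assumes "u \<in> space (PiM {..<N} (\<lambda>_. lborel))"
  shows "indicator (pos_orthant N) u = (\<Prod>i<N. indicator {0<..} (u i) :: real)"
proof (cases "\<forall>i<N. 0 < u i")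
  case True
  then show ?thesis using assms by (simp add: pos_orthant_def indicator_def)
next
  case False
  then obtain i where "i < N" "\<not> 0 < u i" by auto
  then show ?thesis using assms by (auto simp: pos_orthant_def indicator_def)
qed

lemma vdm_sq:
  "\<bar>vandermonde N u\<bar> ^ 2 = (\<Prod>i<N. \<Prod>j\<in>{i<..<N}. (u j - u i)) ^ 2"
proof -
  have "\<bar>vandermonde N u\<bar> ^ 2 = (\<Prod>i<N. \<Prod>j\<in>{i<..<N}. (u i - u j) ^ 2)"
    by (simp add: vandermonde_def prod_power_distrib)
  also have "\<dots> = (\<Prod>i<N. \<Prod>j\<in>{i<..<N}. (u j - u i) ^ 2)"
    by (simp add: power2_commute)
  also have "\<dots> = (\<Prod>i<N. \<Prod>j\<in>{i<..<N}. (u j - u i)) ^ 2"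
    by (simp add: prod_power_distrib)
  finally show ?thesis .
qed

lemma vdm_sum:
  "(\<Prod>i<N. \<Prod>j\<in>{i<..<N}. (u j - u i)) = (\<Sum>p\<in>{p. p permutes {..<N}}. of_int (sign p) * (\<Prod>i<N. u i ^ p i :: real))"
  using vandermonde_sum[where n=N and x=u] by (simp add: atLeast0LessThan)

lemma integrand_expand:
  fixes \<sigma> :: real
  defines "g \<equiv> (\<lambda>k t. indicator {0<..} t * (exp (- ((ln t)^2) / (2*\<sigma>^2)) * t ^ k) :: real)"
  assumes u: "u \<in> space (PiM {..<N} (\<lambda>_. lborel))"
  shows "indicator (pos_orthant N) u *
     ((\<Prod>i<N. exp (- ((ln (u i)) ^ 2) / (2 * \<sigma> ^ 2))) * (abs (vandermonde N u)) ^ 2) =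
   (\<Sum>p\<in>{p. p permutes {..<N}}. \<Sum>\<tau>\<in>{p. p permutes {..<N}}.
      of_int (sign p) * of_int (sign \<tau>) * (\<Prod>i<N. g (p i + \<tau> i) (u i)))"
proof -
  let ?P = "{p. p permutes {..<N}}"
  define a where "a = (\<lambda>p. of_int (sign p) * (\<Prod>i<N. u i ^ p i :: real))"
  have sq0: "\<bar>vandermonde N u\<bar> ^ 2 = (\<Sum>p\<in>?P. a p) * (\<Sum>p\<in>?P. a p)"
    unfolding vdm_sq vdm_sum a_def by (simp add: power2_eq_square)
  have sq: "\<bar>vandermonde N u\<bar> ^ 2 = (\<Sum>p\<in>?P. \<Sum>\<tau>\<in>?P. a p * a \<tau>)"
    unfolding sq0 by (rule sum_product)
  have ab: "a p * a \<tau> = of_int (sign p) * of_int (sign \<tau>) * (\<Prod>i<N. u i ^ (p i + \<tau> i))" for p \<tau>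
    by (simp add: a_def power_add prod.distrib algebra_simps)
  have "indicator (pos_orthant N) u *
     ((\<Prod>i<N. exp (- ((ln (u i)) ^ 2) / (2 * \<sigma> ^ 2))) * (abs (vandermonde N u)) ^ 2) =
     (\<Prod>i<N. indicator {0<..} (u i)) * (\<Prod>i<N. exp (- ((ln (u i)) ^ 2) / (2 * \<sigma> ^ 2))) *
     (\<Sum>p\<in>?P. \<Sum>\<tau>\<in>?P. of_int (sign p) * of_int (sign \<tau>) * (\<Prod>i<N. u i ^ (p i + \<tau> i)))"
    by (simp only: ind_prod[OF u] sq ab mult.assoc)
  also have "\<dots> = (\<Sum>p\<in>?P. \<Sum>\<tau>\<in>?P. of_int (sign p) * of_int (sign \<tau>) *
      ((\<Prod>i<N. indicator {0<..} (u i)) * (\<Prod>i<N. exp (- ((ln (u i)) ^ 2) / (2 * \<sigma> ^ 2))) * (\<Prod>i<N. u i ^ (p i + \<tau> i))))"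
    by (simp add: sum_distrib_left algebra_simps)
  also have "\<dots> = (\<Sum>p\<in>?P. \<Sum>\<tau>\<in>?P. of_int (sign p) * of_int (sign \<tau>) * (\<Prod>i<N. g (p i + \<tau> i) (u i)))"
    by (simp add: g_def prod.distrib mult.assoc)
  finally show ?thesis .
qed

lemma hankel:
  fixes s c :: real
  shows "(\<Sum>\<rho>\<in>{p. p permutes {..<N}}. of_int (sign \<rho>) * (\<Prod>i<N. c * exp ((real (i + \<rho> i) + 1)^2 * s / 2))) =
     c ^ N * exp (real N * s / 2) * exp (s * (\<Sum>j<N. real j ^ 2 + 2 * real j)) *
     (\<Prod>i<N. \<Prod>j\<in>{i<..<N}. (exp (s * real j) - exp (s * real i)))"
proof -
  define \<alpha> where "\<alpha> = (\<lambda>k::nat. exp (s * (real k ^ 2 / 2 + real k)))"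
  define K where "K = c ^ N * exp (real N * s / 2) * exp (s * (\<Sum>j<N. real j ^ 2 + 2 * real j))"
  have per: "(\<Prod>i<N. c * exp ((real (i + \<rho> i) + 1)^2 * s / 2)) = K * (\<Prod>i<N. exp (s * real i) ^ \<rho> i)"
    if r: "\<rho> permutes {..<N}" for \<rho>
  proof -
    have f: "c * exp ((real (i + \<rho> i) + 1)^2 * s / 2) = c * exp (s / 2) * (\<alpha> i * \<alpha> (\<rho> i)) * exp (s * real i) ^ \<rho> i" for i
    proof -
      have e: "(real (i + \<rho> i) + 1)^2 * s / 2 = s / 2 + s * (real i ^ 2 / 2 + real i) + s * (real (\<rho> i) ^ 2 / 2 + real (\<rho> i)) + real (\<rho> i) * (s * real i)"
        by (simp add: power2_eq_square algebra_simps)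
      show ?thesis
        unfolding e exp_add exp_of_nat_mult \<alpha>_def by (simp only: ac_simps)
    qed
    have pa: "(\<Prod>i<N. \<alpha> (\<rho> i)) = (\<Prod>i<N. \<alpha> i)"
      using prod.permute[OF r, of \<alpha>] by (simp add: comp_def)
    have aa: "(\<Prod>i<N. \<alpha> i) * (\<Prod>i<N. \<alpha> i) = exp (s * (\<Sum>j<N. real j ^ 2 + 2 * real j))"
      by (simp add: \<alpha>_def prod.distrib[symmetric] exp_add[symmetric] exp_sum sum_distrib_left algebra_simps)
    have "(\<Prod>i<N. c * exp ((real (i + \<rho> i) + 1)^2 * s / 2)) =
        (c * exp (s / 2)) ^ N * ((\<Prod>i<N. \<alpha> i) * (\<Prod>i<N. \<alpha> (\<rho> i))) * (\<Prod>i<N. exp (s * real i) ^ \<rho> i)"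
      by (simp only: f prod.distrib prod_constant card_lessThan power_mult_distrib)
    also have "\<dots> = K * (\<Prod>i<N. exp (s * real i) ^ \<rho> i)"
      by (simp add: pa aa K_def power_mult_distrib exp_of_nat_mult[symmetric] algebra_simps)
    finally show ?thesis .
  qed
  have "(\<Sum>\<rho>\<in>{p. p permutes {..<N}}. of_int (sign \<rho>) * (\<Prod>i<N. c * exp ((real (i + \<rho> i) + 1)^2 * s / 2))) =
      (\<Sum>\<rho>\<in>{p. p permutes {..<N}}. K * (of_int (sign \<rho>) * (\<Prod>i<N. exp (s * real i) ^ \<rho> i)))"
  proof (intro sum.cong refl)
    fix \<rho> assume "\<rho> \<in> {p. p permutes {..<N}}"
    then show "of_int (sign \<rho>) * (\<Prod>i<N. c * exp ((real (i + \<rho> i) + 1)^2 * s / 2)) =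
      K * (of_int (sign \<rho>) * (\<Prod>i<N. exp (s * real i) ^ \<rho> i))"
      using per[of \<rho>] by simp
  qed
  also have "\<dots> = K * (\<Prod>i<N. \<Prod>j\<in>{i<..<N}. (exp (s * real j) - exp (s * real i)))"
    by (simp add: sum_distrib_left[symmetric] vdm_sum[where N=N and u="\<lambda>i. exp (s * real i)"])
  finally show ?thesis by (simp add: K_def)
qed


theorem proposition4:
  fixes N :: nat and \<sigma> \<omega> :: real
  assumes "N \<ge> 1" and "\<sigma> > 0" and "\<omega> > 0"
  shows "Z2 \<omega> N \<sigma> =
    \<omega> / 2 ^ (N^2) * (2 * pi * \<sigma>^2) powr (real N / 2)
    * exp ((real N ^ 3 - real N) * \<sigma>^2 / 6)
    * (\<Prod>k\<in>{1..<N}. (1 - exp (- real k * \<sigma>^2)) ^ (N - k))"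
proof -
  let ?P = "{p. p permutes {..<N}}"
  let ?M = "PiM {..<N} (\<lambda>_. lborel) :: (nat \<Rightarrow> real) measure"
  define g where "g = (\<lambda>k t. indicator {0<..} t * (exp (- ((ln t)^2) / (2*\<sigma>^2)) * t ^ k) :: real)"
  define c where "c = sqrt (2*pi*\<sigma>^2)"
  define M where "M = (\<lambda>k::nat. c * exp ((real k + 1)^2 * \<sigma>^2 / 2))"
  define Qp where "Qp = (\<Prod>k\<in>{1..<N}. (1 - exp (- real k * \<sigma>^2)) ^ (N - k))"
  define F where "F = (\<lambda>u. (\<Prod>i<N. exp (- ((ln (u i)) ^ 2) / (2 * \<sigma> ^ 2))) * (abs (vandermonde N u)) ^ 2)"
  have mom: "has_bochner_integral lborel (g k) (M k)" for k
    unfolding g_def M_def c_def by (rule moment[OF assms(2)])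
  interpret PS: product_sigma_finite "\<lambda>_::nat. lborel :: real measure"
    by (simp add: product_sigma_finite_def sigma_finite_lborel)
  have intg: "integrable ?M (\<lambda>u. \<Prod>i<N. g (p i + \<tau> i) (u i))" for p \<tau> :: "nat \<Rightarrow> nat"
    by (rule PS.product_integrable_prod[where f="\<lambda>i. g (p i + \<tau> i)"]) (auto intro: integrable.intros[OF mom])
  have intv: "integral\<^sup>L ?M (\<lambda>u. \<Prod>i<N. g (p i + \<tau> i) (u i)) = (\<Prod>i<N. M (p i + \<tau> i))" for p \<tau> :: "nat \<Rightarrow> nat"
    using PS.product_integral_prod[where f="\<lambda>i. g (p i + \<tau> i)" and I="{..<N}"]
    by (simp add: integrable.intros[OF mom] has_bochner_integral_integral_eq[OF mom])
  have "set_lebesgue_integral ?M (pos_orthant N) F =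
      integral\<^sup>L ?M (\<lambda>u. \<Sum>p\<in>?P. \<Sum>\<tau>\<in>?P. of_int (sign p) * of_int (sign \<tau>) * (\<Prod>i<N. g (p i + \<tau> i) (u i)))"
    unfolding set_lebesgue_integral_def
  proof (rule Bochner_Integration.integral_cong[OF refl])
    fix u assume u: "u \<in> space ?M"
    show "indicator (pos_orthant N) u *\<^sub>R F u = (\<Sum>p\<in>?P. \<Sum>\<tau>\<in>?P. of_int (sign p) * of_int (sign \<tau>) * (\<Prod>i<N. g (p i + \<tau> i) (u i)))"
      using integrand_expand[where u=u and N=N and \<sigma>=\<sigma>, OF u] unfolding g_def F_def by simp
  qed
  also have "\<dots> = (\<Sum>p\<in>?P. \<Sum>\<tau>\<in>?P. of_int (sign p) * of_int (sign \<tau>) * (\<Prod>i<N. M (p i + \<tau> i)))"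
    by (simp add: intg intv)
  also have "\<dots> = fact N * (\<Sum>\<rho>\<in>?P. of_int (sign \<rho>) * (\<Prod>i<N. M (i + \<rho> i)))"
    by (rule double_perm_sum)
  also have "(\<Sum>\<rho>\<in>?P. of_int (sign \<rho>) * (\<Prod>i<N. M (i + \<rho> i))) =
     c ^ N * exp (real N * \<sigma>^2 / 2) * exp (\<sigma>^2 * (\<Sum>j<N. real j ^ 2 + 2 * real j)) *
     (\<Prod>i<N. \<Prod>j\<in>{i<..<N}. (exp (\<sigma>^2 * real j) - exp (\<sigma>^2 * real i)))"
    unfolding M_def by (rule hankel)
  also have "(\<Prod>i<N. \<Prod>j\<in>{i<..<N}. (exp (\<sigma>^2 * real j) - exp (\<sigma>^2 * real i))) =
      exp (\<sigma>^2 * (\<Sum>j<N. real j ^ 2)) * Qp"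
    unfolding Qp_def by (rule qprod)
  finally have I: "set_lebesgue_integral ?M (pos_orthant N) F = fact N * (c ^ N * exp (real N * \<sigma>^2 / 2) *
      exp (\<sigma>^2 * (\<Sum>j<N. real j ^ 2 + 2 * real j)) * (exp (\<sigma>^2 * (\<Sum>j<N. real j ^ 2)) * Qp))" .
  have cN: "c ^ N = (2*pi*\<sigma>^2) powr (real N / 2)"
  proof -
    have pos: "0 < 2*pi*\<sigma>^2" using assms by simp
    have "(2*pi*\<sigma>^2) powr (real N / 2) = ((2*pi*\<sigma>^2) powr (1/2)) powr (real N)"
      by (simp add: powr_powr)
    also have "\<dots> = c ^ N"
      using pos by (simp add: powr_half_sqrt c_def powr_realpow)
    finally show ?thesis by simp
  qed
  have S2: "(\<Sum>j<N. real j ^ 2) = real N * (real N - 1) * (2 * real N - 1) / 6" using sum_sq[of N] by simp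
  have S1: "(\<Sum>j<N. real j) = real N * (real N - 1) / 2" using sum_lin[of N] by simp
  have sd: "(\<Sum>j<N. real j ^ 2 + 2 * real j) = (\<Sum>j<N. real j ^ 2) + 2 * (\<Sum>j<N. real j)"
    by (simp add: sum.distrib sum_distrib_left)
  have ex: "exp (- (real N ^ 3) * \<sigma>^2 / 2) * exp (real N * \<sigma>^2 / 2) * exp (\<sigma>^2 * (\<Sum>j<N. real j ^ 2 + 2 * real j)) *
      exp (\<sigma>^2 * (\<Sum>j<N. real j ^ 2)) = exp ((real N ^ 3 - real N) * \<sigma>^2 / 6)"
  proof -
    have "- (real N ^ 3) * \<sigma>^2 / 2 + real N * \<sigma>^2 / 2 + \<sigma>^2 * (\<Sum>j<N. real j ^ 2 + 2 * real j) +
      \<sigma>^2 * (\<Sum>j<N. real j ^ 2) = (real N ^ 3 - real N) * \<sigma>^2 / 6"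
      unfolding sd S1 S2 by (simp add: field_simps power3_eq_cube)
    then show ?thesis by (simp add: exp_add[symmetric])
  qed
  have "Z2 \<omega> N \<sigma> = \<omega> / 2 ^ (N^2) * c ^ N * (exp (- (real N ^ 3) * \<sigma>^2 / 2) * exp (real N * \<sigma>^2 / 2) *
      exp (\<sigma>^2 * (\<Sum>j<N. real j ^ 2 + 2 * real j)) * exp (\<sigma>^2 * (\<Sum>j<N. real j ^ 2))) * Qp"
    unfolding Z2_def C_N2_def F_def[symmetric] I by (simp add: field_simps)
  then show ?thesis unfolding ex cN Qp_def .
qed


end
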